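(* Let $c = \frac{4}{9-\sqrt5}\approx 0.5914$. There exists a deterministic online algorithm for fractional matchings in the adversarial edge arrival model which, on every instance whose underlying graph has maximum degree at most three, achieves guarantee $c$: at every timepoint $t$, the fractional matching $y$ maintained by the algorithm satisfies $\sum_{e\in E_t} y_e \ge c\cdot \nu(G_t)$, where $G_t=(V,E_t)$ is the graph of edges arrived up to time $t$ and $\nu(G_t)$ is the maximum cardinality of a matching in $G_t$. (This holds for general, not necessarily bipartite, graphs.)
   Context: Adversarial edge arrival model for fractional matchings: edges of a graph arrive one at a time in an order chosen by an adversary. When an edge $e$ arrives, the algorithm must immediately and irrevocably assign a value $y_e\ge 0$ such that at every timepoint, for every vertex $w$, $\sum_{f\in\delta(w)} y_f\le 1$ (sum over arrived edges incident to $w$). An algorithm achieves guarantee $\gamma$ on a class of instances if at every timepoint of every instance in the class, $\sum_e y_e \ge \gamma\cdot\nu(G_t)$, with $\nu(G_t)$ the maximum matching cardinality of the currently arrived graph. "Maximum degree at most three" means the final (hence every intermediate) arrived graph has all vertex degrees at most $3$. *)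

theory Defs
  imports Complex_Main
begin

definition is_edge :: "'v set \<Rightarrow> bool" where
  "is_edge e \<longleftrightarrow> (\<exists>u v. u \<noteq> v \<and> e = {u, v})"

definition is_matching :: "'v set set \<Rightarrow> bool" where
  "is_matching M \<longleftrightarrow> (\<forall>e\<in>M. \<forall>f\<in>M. e \<noteq> f \<longrightarrow> e \<inter> f = {})"

definition nu :: "'v set set \<Rightarrow> nat" where
  "nu E = Max {card M | M. M \<subseteq> E \<and> is_matching M}"

definition max_degree_le :: "nat \<Rightarrow> 'v set set \<Rightarrow> bool" where
  "max_degree_le d E \<longleftrightarrow> (\<forall>w. card {e\<in>E. w \<in> e} \<le> d)"

text \<open>An instance: a finite sequence of distinct edges in adversarial arrival order.\<close>
definition valid_instance :: "'v set list \<Rightarrow> bool" where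
  "valid_instance es \<longleftrightarrow> distinct es \<and> (\<forall>e\<in>set es. is_edge e)"

text \<open>A deterministic online algorithm is a function which, given the arrival
  history up to and including the current edge, returns the value irrevocably
  assigned to the current (last) edge.\<close>
type_synonym 'v online_alg = "'v set list \<Rightarrow> real"

definition alg_value :: "'v online_alg \<Rightarrow> 'v set list \<Rightarrow> nat \<Rightarrow> real" where
  "alg_value A es i = A (take (Suc i) es)"

definition feasible_at :: "'v online_alg \<Rightarrow> 'v set list \<Rightarrow> nat \<Rightarrow> bool" where
  "feasible_at A es t \<longleftrightarrow>
     (\<forall>i<t. alg_value A es i \<ge> 0) \<and>
     (\<forall>w. (\<Sum>i\<in>{i. i < t \<and> w \<in> es ! i}. alg_value A es i) \<le> 1)"

definition frac_value :: "'v online_alg \<Rightarrow> 'v set list \<Rightarrow> nat \<Rightarrow> real" where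
  "frac_value A es t = (\<Sum>i<t. alg_value A es i)"

definition valid_online_alg :: "'v online_alg \<Rightarrow> bool" where
  "valid_online_alg A \<longleftrightarrow>
     (\<forall>es. valid_instance es \<longrightarrow> (\<forall>t\<le>length es. feasible_at A es t))"

definition achieves_guarantee_deg :: "'v online_alg \<Rightarrow> nat \<Rightarrow> real \<Rightarrow> bool" where
  "achieves_guarantee_deg A d \<gamma> \<longleftrightarrow>
     (\<forall>es. valid_instance es \<longrightarrow> max_degree_le d (set es) \<longrightarrow>
        (\<forall>t\<le>length es. frac_value A es t \<ge> \<gamma> * real (nu (set (take t es)))))"

end

theory Submission
  imports Defs
begin

definition cst :: real where "cst = 4 / (9 - sqrt 5)"

lemma sqrt5_bounds: "2.23 < sqrt (5::real)" "sqrt (5::real) < 2.24"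
proof -
  show "2.23 < sqrt (5::real)" by (rule real_less_rsqrt) (simp add: power2_eq_square)
  have "sqrt (5::real) < sqrt (2.24^2)" by (subst real_sqrt_less_iff) (simp add: power2_eq_square)
  then show "sqrt (5::real) < 2.24" by simp
qed

lemma cst_alt: "cst = (9 + sqrt 5) / 19"
proof -
  have s: "sqrt 5 * sqrt 5 = (5::real)" by simp
  have "(9 - sqrt 5) \<noteq> (0::real)" using sqrt5_bounds by simp
  then show ?thesis unfolding cst_def using s by (simp add: field_simps)
qed

lemma cst_quad: "19 * cst * cst - 18 * cst + 4 = 0"
proof -
  have s: "sqrt 5 * sqrt 5 = (5::real)" by simp
  show ?thesis unfolding cst_alt by (simp add: field_simps algebra_simps s)
qed

lemma cst_bounds: "0.59 < cst" "cst < 0.6"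
  unfolding cst_alt using sqrt5_bounds by simp_all


definition Aco :: real where "Aco = 5 * cst - 2"
definition Kco :: real where "Kco = 1 - 3 * cst / 2"

definition Pinv :: "nat \<Rightarrow> real \<Rightarrow> real \<Rightarrow> bool" where
  "Pinv d z l \<longleftrightarrow> 0 \<le> z \<and> z \<le> 1 \<and> 0 \<le> l \<and> l \<le> 1 \<and> (d = 0 \<longrightarrow> z = 0 \<and> l = 0)
     \<and> (d = 1 \<longrightarrow> l \<le> Aco * z + Kco) \<and> (d \<le> 2 \<longrightarrow> l \<le> 1 - cst + cst * z)"

definition rq :: "nat \<Rightarrow> real \<Rightarrow> real \<Rightarrow> real \<Rightarrow> real" where
  "rq d z l D = (if d = 1 then max 0 ((l + cst * D + cst * (1 - z) - 1) / cst) else 0)"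

definition shr :: "nat \<Rightarrow> real \<Rightarrow> real \<Rightarrow> nat \<Rightarrow> real \<Rightarrow> real \<Rightarrow> real \<Rightarrow> real" where
  "shr dw zw lw dO zO lO D =
     (if dw < dO then D - rq dO zO lO D
      else if dO < dw then rq dw zw lw D
      else rq dw zw lw D + (D - rq dw zw lw D - rq dO zO lO D) / 2)"

lemma cpos: "0 < cst" using cst_bounds by simp

lemma shr_sum: "shr dw zw lw dO zO lO D + shr dO zO lO dw zw lw D = D"
  unfolding shr_def by (auto simp: field_simps)

lemma rq_ge0: "0 \<le> rq d z l D"
  unfolding rq_def by auto

lemma rq_times: "d = 1 \<Longrightarrow> l + cst * D + cst * (1 - z) - 1 \<le> cst * rq d z l D"
proof -
  assume "d = 1"
  have "cst * ((l + cst * D + cst * (1 - z) - 1) / cst) = l + cst * D + cst * (1 - z) - 1"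
    using cpos by simp
  moreover have "(l + cst * D + cst * (1 - z) - 1) / cst \<le> rq d z l D"
    using \<open>d = 1\<close> unfolding rq_def by simp
  ultimately show ?thesis using cpos
    by (metis mult_le_cancel_left_pos)
qed

lemma rq_eq: "d = 1 \<Longrightarrow> 0 < rq d z l D \<Longrightarrow> cst * rq d z l D = l + cst * D + cst * (1 - z) - 1"
proof -
  assume a: "d = 1" "0 < rq d z l D"
  then have "rq d z l D = (l + cst * D + cst * (1 - z) - 1) / cst"
    unfolding rq_def by (auto simp: max_def split: if_splits)
  then show ?thesis using cpos by simp
qed

lemma rq_leD:
  assumes "Pinv d z l" "0 \<le> D"
  shows "rq d z l D \<le> D"
proof (cases "d = 1")
  case True
  have l: "l \<le> 1 - cst + cst * z" using assms True unfolding Pinv_def by auto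
  have "(l + cst * D + cst * (1 - z) - 1) / cst \<le> D"
    using cpos l by (simp add: divide_le_eq algebra_simps)
  then show ?thesis using True assms unfolding rq_def by simp
next
  case False then show ?thesis using assms unfolding rq_def by simp
qed

lemma rq_pair:
  assumes "Pinv 1 zu lu" "Pinv 1 zv lv" "D = max 0 (1 - zu - zv)"
  shows "rq 1 zu lu D + rq 1 zv lv D \<le> D"
proof (cases "0 < rq 1 zu lu D \<and> 0 < rq 1 zv lv D")
  case True
  have eu: "cst * rq 1 zu lu D = lu + cst * D + cst * (1 - zu) - 1" using rq_eq True by blast
  have ev: "cst * rq 1 zv lv D = lv + cst * D + cst * (1 - zv) - 1" using rq_eq True by blast
  have lu: "lu \<le> Aco * zu + Kco" and lv: "lv \<le> Aco * zv + Kco"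
    and lu2: "lu \<le> 1 - cst + cst * zu" and lv2: "lv \<le> 1 - cst + cst * zv"
    and zu: "0 \<le> zu" and zv: "0 \<le> zv"
    using assms unfolding Pinv_def by auto
  show ?thesis
  proof (cases "1 - zu - zv \<le> 0")
    case True
    then have "D = 0" using assms by simp
    then have "cst * rq 1 zu lu D \<le> 0" using eu lu2 True zv cpos
      by (simp add: algebra_simps)
    then have False using True cpos \<open>0 < rq 1 zu lu D \<and> 0 < rq 1 zv lv D\<close>
      by (simp add: mult_le_0_iff)
    then show ?thesis ..
  next
    case False
    then have D: "D = 1 - zu - zv" using assms by simp
    have "cst * (rq 1 zu lu D + rq 1 zv lv D) = lu + lv + 2 * cst * D + cst * (2 - zu - zv) - 2"
      using eu ev by (simp add: algebra_simps)
    also have "\<dots> \<le> Aco * (zu + zv) + 2 * Kco + 2 * cst * D + cst * (2 - zu - zv) - 2"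
      using lu lv by (simp add: algebra_simps)
    also have "\<dots> = cst * D + (3 * cst - 2) * (1 - D)"
      unfolding Aco_def Kco_def D by (simp add: algebra_simps)
    also have "\<dots> \<le> cst * D"
    proof -
      have "1 - D \<ge> 0" using D zu zv by simp
      moreover have "3 * cst - 2 \<le> 0" using cst_bounds by simp
      ultimately show ?thesis by (simp add: mult_nonpos_nonneg)
    qed
    finally show ?thesis using cpos by simp
  qed
next
  case False
  then have "rq 1 zu lu D = 0 \<or> rq 1 zv lv D = 0"
    using rq_ge0[of 1 zu lu D] rq_ge0[of 1 zv lv D] by auto
  moreover have "0 \<le> D" using assms by simp
  ultimately show ?thesis using rq_leD[OF assms(1)] rq_leD[OF assms(2)] by auto
qed


lemma fresh1:
  assumes P: "Pinv 1 z l" and D: "D = max 0 (1 - z)"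
  shows "cst * D \<le> Aco * (D - rq 1 z l D) + Kco \<and> cst * D \<le> 1 - cst + cst * (D - rq 1 z l D)"
proof -
  have z: "0 \<le> z" "z \<le> 1" and l: "l \<le> Aco * z + Kco" "l \<le> 1 - cst + cst * z" "0 \<le> l"
    using P unfolding Pinv_def by auto
  have D1: "D = 1 - z" using D z by simp
  have D01: "0 \<le> D" "D \<le> 1" using D1 z by auto
  have Apos: "cst \<le> Aco" unfolding Aco_def using cst_bounds by simp
  have Kpos: "0 \<le> Kco" unfolding Kco_def using cst_bounds by simp
  show ?thesis
  proof (cases "0 < rq 1 z l D")
    case False
    then have r0: "rq 1 z l D = 0" using rq_ge0[of 1 z l D] by simp
    have "cst * D \<le> Aco * D" using Apos D01 by (simp add: mult_right_mono)
    then show ?thesis using r0 Kpos cst_bounds by simp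
  next
    case True
    have cr: "cst * rq 1 z l D = l + cst * D + cst * (1 - z) - 1" using rq_eq True by blast
    define a where "a = D - rq 1 z l D"
    have ca0: "cst * a = cst * D - cst * rq 1 z l D" unfolding a_def by (simp add: algebra_simps)
    have czD: "cst * (1 - z) = cst * D" using D1 by simp
    have ca: "cst * a = 1 - l - cst * D" using ca0 cr czD by linarith
    have A0: "0 \<le> Aco" using Apos cpos by simp
    have lb: "l \<le> Aco * (1 - D) + Kco" using l D1 by simp
    have "Aco * l \<le> Aco * (Aco * (1 - D) + Kco)" using lb A0 by (rule mult_left_mono)
    then have "Aco * (1 - (Aco * (1 - D) + Kco) - cst * D) \<le> Aco * (1 - l - cst * D)"
      by (simp add: algebra_simps)
    moreover have "Aco * (1 - (Aco * (1 - D) + Kco) - cst * D) + cst * Kco - cst * (cst * D)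
        = (D - 1) * (19 * cst * cst - 18 * cst + 4)"
      unfolding Aco_def Kco_def by (simp add: field_simps)
    ultimately have "cst * (cst * D) \<le> Aco * (cst * a) + cst * Kco"
      using ca cst_quad by simp
    then have "cst * (cst * D) \<le> cst * (Aco * a + Kco)" by (simp add: algebra_simps)
    then have g1: "cst * D \<le> Aco * a + Kco" using cpos by simp
    have "(2 - 3 * cst) * D \<le> (2 - 3 * cst) * 1"
      using D01 cst_bounds by (intro mult_left_mono) auto
    then have h': "2 * D - 3 * (cst * D) \<le> 2 - 3 * cst" by (simp add: algebra_simps)
    have lb': "l \<le> 5 * cst - 2 - 5 * (cst * D) + 2 * D + 1 - 3 * cst / 2"
      using lb unfolding Aco_def Kco_def by (simp add: algebra_simps)
    have "l + 2 * (cst * D) \<le> 2 - cst" using h' lb' cst_bounds by linarith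
    then have g2: "cst * D \<le> 1 - cst + cst * a" using ca by linarith
    show ?thesis using g1 g2 unfolding a_def by simp
  qed
qed


lemma side:
  assumes Pw: "Pinv dw zw lw" and Po: "Pinv dO zO lO" and dw: "dw \<le> 2" and dO: "dO \<le> 2"
    and D: "D = max 0 (1 - zw - zO)"
  shows "0 \<le> shr dw zw lw dO zO lO D \<and> lw + cst * D \<le> 1 \<and>
         Pinv (Suc dw) (zw + shr dw zw lw dO zO lO D) (lw + cst * D)"
proof -
  define a where "a = shr dw zw lw dO zO lO D"
  have D0: "0 \<le> D" using D by simp
  have w: "0 \<le> zw" "zw \<le> 1" "0 \<le> lw" "lw \<le> 1 - cst + cst * zw"
    "dw = 0 \<Longrightarrow> zw = 0 \<and> lw = 0" "dw = 1 \<Longrightarrow> lw \<le> Aco * zw + Kco"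
    using Pw dw unfolding Pinv_def by auto
  have o: "0 \<le> zO" "zO \<le> 1" "dO = 0 \<Longrightarrow> zO = 0 \<and> lO = 0"
    using Po unfolding Pinv_def by auto
  have rw0: "dw \<noteq> 1 \<Longrightarrow> rq dw zw lw D = 0" and ro0: "dO \<noteq> 1 \<Longrightarrow> rq dO zO lO D = 0"
    unfolding rq_def by auto
  have ab: "0 \<le> a \<and> a \<le> D \<and> (dw = 1 \<longrightarrow> rq dw zw lw D \<le> a)"
  proof (cases "dw < dO")
    case True
    then have "a = D - rq dO zO lO D" unfolding a_def shr_def by simp
    moreover have "dw = 1 \<Longrightarrow> rq dO zO lO D = 0" using True dO ro0 by simp
    ultimately show ?thesis using rq_leD[OF Po D0] rq_ge0[of dO zO lO D] rq_leD[OF Pw D0] by auto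
  next
    case False
    show ?thesis
    proof (cases "dO < dw")
      case True
      then have "a = rq dw zw lw D" unfolding a_def shr_def by simp
      then show ?thesis using rq_leD[OF Pw D0] rq_ge0[of dw zw lw D] by auto
    next
      case False
      then have eq: "dO = dw" using \<open>\<not> dw < dO\<close> by simp
      then have a: "a = rq dw zw lw D + (D - rq dw zw lw D - rq dO zO lO D) / 2"
        unfolding a_def shr_def by simp
      show ?thesis
      proof (cases "dw = 1")
        case True
        have "rq 1 zw lw D + rq 1 zO lO D \<le> D"
          using rq_pair[of zw lw zO lO D] Pw Po True eq D by simp
        then show ?thesis using a True eq rq_ge0[of 1 zw lw D] rq_ge0[of 1 zO lO D] by (auto simp: field_simps)
      next
        case False
        then show ?thesis using a rw0 ro0 eq D0 by simp
      qed
    qed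
  qed
  have zb: "zw + a \<le> 1"
  proof (cases "1 - zw - zO \<le> 0")
    case True then have "D = 0" using D by simp
    then show ?thesis using ab w by simp
  next
    case False then have "D = 1 - zw - zO" using D by simp
    then show ?thesis using ab o by simp
  qed
  have Dle: "D \<le> 1 - zw" using D o w by auto
  have cD: "cst * D \<le> cst * (1 - zw)" using Dle cpos by simp
  have cD0: "0 \<le> cst * D" using D0 cpos by simp
  have l1: "lw + cst * D \<le> 1" using w cD by (simp add: algebra_simps)
  have p1: "dw = 0 \<Longrightarrow> cst * D \<le> Aco * a + Kco \<and> cst * D \<le> 1 - cst + cst * a"
  proof -
    assume d0: "dw = 0"
    then have z0: "zw = 0" using w by simp
    have "dO = 0 \<or> dO = 1 \<or> dO = 2" using dO by auto
    then show ?thesis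
    proof (elim disjE)
      assume o0: "dO = 0"
      then have "zO = 0" "lO = 0" using o by auto
      then have "D = 1" using D z0 by simp
      moreover have a12: "a = 1 / 2" unfolding a_def shr_def using o0 d0 \<open>D = 1\<close> rw0 ro0 by simp
      ultimately show ?thesis unfolding a12 Aco_def Kco_def using cst_bounds by (simp add: field_simps)
    next
      assume o1: "dO = 1"
      then have "a = D - rq 1 zO lO D" unfolding a_def shr_def using d0 by simp
      moreover have "D = max 0 (1 - zO)" using D z0 by simp
      ultimately show ?thesis using fresh1[of zO lO D] Po o1 by simp
    next
      assume o2: "dO = 2"
      then have "a = D" unfolding a_def shr_def using d0 ro0 by simp
      moreover have "cst * D \<le> Aco * D" using D0 cst_bounds unfolding Aco_def
        by (intro mult_right_mono) auto
      moreover have "0 \<le> Kco" unfolding Kco_def using cst_bounds by simp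
      ultimately show ?thesis using cst_bounds by simp
    qed
  qed
  have p2: "dw = 1 \<Longrightarrow> lw + cst * D \<le> 1 - cst + cst * (zw + a)"
  proof -
    assume d1: "dw = 1"
    have "rq dw zw lw D \<le> a" using ab d1 by simp
    then have "cst * rq dw zw lw D \<le> cst * a" using cpos by simp
    moreover have "lw + cst * D + cst * (1 - zw) - 1 \<le> cst * rq dw zw lw D" using rq_times d1 by blast
    ultimately show ?thesis by (simp add: algebra_simps)
  qed
  have "Pinv (Suc dw) (zw + a) (lw + cst * D)"
    unfolding Pinv_def
  proof (intro conjI impI)
    show "0 \<le> zw + a" using w ab by simp
    show "zw + a \<le> 1" by (rule zb)
    show "0 \<le> lw + cst * D" using w cD0 by simp
    show "lw + cst * D \<le> 1" by (rule l1)
    show "zw + a = 0" if "Suc dw = 0" using that by simp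
    show "lw + cst * D = 0" if "Suc dw = 0" using that by simp
    show "lw + cst * D \<le> Aco * (zw + a) + Kco" if "Suc dw = 1"
      using that p1 w by simp
    show "lw + cst * D \<le> 1 - cst + cst * (zw + a)" if "Suc dw \<le> 2"
    proof -
      have "dw = 0 \<or> dw = 1" using that by auto
      then show ?thesis using p1 p2 w by auto
    qed
  qed
  then show ?thesis using ab l1 unfolding a_def by simp
qed


type_synonym 'v st = "('v \<Rightarrow> nat) \<times> ('v \<Rightarrow> real) \<times> ('v \<Rightarrow> real)"

definition ends :: "'v set \<Rightarrow> 'v \<times> 'v" where
  "ends e = (SOME p. fst p \<noteq> snd p \<and> e = {fst p, snd p})"

definition Dst :: "'v st \<Rightarrow> 'v set \<Rightarrow> real" where
  "Dst S e = max 0 (1 - fst (snd S) (fst (ends e)) - fst (snd S) (snd (ends e)))"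

definition yv :: "'v st \<Rightarrow> 'v set \<Rightarrow> real" where
  "yv S e = (if snd (snd S) (fst (ends e)) + cst * Dst S e \<le> 1 \<and>
                snd (snd S) (snd (ends e)) + cst * Dst S e \<le> 1 then cst * Dst S e else 0)"

definition shu :: "'v st \<Rightarrow> 'v \<Rightarrow> 'v \<Rightarrow> real \<Rightarrow> real" where
  "shu S u v D = shr (fst S u) (fst (snd S) u) (snd (snd S) u) (fst S v) (fst (snd S) v) (snd (snd S) v) D"

definition stp :: "'v st \<Rightarrow> 'v set \<Rightarrow> 'v st" where
  "stp S e = (let u = fst (ends e); v = snd (ends e); D = Dst S e; y = yv S e in
     ((fst S)(u := fst S u + 1, v := fst S v + 1),
      (fst (snd S))(u := fst (snd S) u + shu S u v D, v := fst (snd S) v + shu S v u D),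
      (snd (snd S))(u := snd (snd S) u + y, v := snd (snd S) v + y)))"

definition run :: "'v set list \<Rightarrow> 'v st" where
  "run es = foldl stp ((\<lambda>_. 0), (\<lambda>_. 0), (\<lambda>_. 0)) es"

definition algo :: "'v online_alg" where
  "algo es = (if es = [] then 0 else yv (run (butlast es)) (last es))"

lemma ends_prop: "is_edge e \<Longrightarrow> fst (ends e) \<noteq> snd (ends e) \<and> e = {fst (ends e), snd (ends e)}"
proof -
  assume "is_edge e"
  then obtain u v where "u \<noteq> v" "e = {u, v}" unfolding is_edge_def by blast
  then have "\<exists>p. fst p \<noteq> snd p \<and> e = {fst p, snd p}" by (intro exI[of _ "(u, v)"]) simp
  then show ?thesis unfolding ends_def by (rule someI_ex)
qed

lemma stp_comp:
  assumes "fst (ends e) \<noteq> snd (ends e)"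
  shows "fst (stp S e) w = fst S w + (if w = fst (ends e) \<or> w = snd (ends e) then 1 else 0)"
    "snd (snd (stp S e)) w = snd (snd S) w + (if w = fst (ends e) \<or> w = snd (ends e) then yv S e else 0)"
    "fst (snd (stp S e)) w = fst (snd S) w + (if w = fst (ends e) then shu S (fst (ends e)) (snd (ends e)) (Dst S e)
        else if w = snd (ends e) then shu S (snd (ends e)) (fst (ends e)) (Dst S e) else 0)"
  using assms by (auto simp: stp_def Let_def)

lemma run_take_Suc: "i < length es \<Longrightarrow> run (take (Suc i) es) = stp (run (take i es)) (es ! i)"
  unfolding run_def by (simp add: take_Suc_conv_app_nth)

lemma alg_value_eq: "i < length es \<Longrightarrow> alg_value algo es i = yv (run (take i es)) (es ! i)"
  unfolding alg_value_def algo_def by (simp add: take_Suc_conv_app_nth)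

lemma yv_ge0: "0 \<le> yv S e"
  unfolding yv_def Dst_def using cpos by auto

lemma set_Suc: "k < length es \<Longrightarrow> {i. i < Suc k \<and> w \<in> es ! i} =
   {i. i < k \<and> w \<in> es ! i} \<union> (if w \<in> es ! k then {k} else {})"
  by (auto simp: less_Suc_eq)

lemma feas_inv:
  assumes E: "\<forall>e\<in>set es. is_edge e" and k: "k \<le> length es"
  shows "(\<forall>w. snd (snd (run (take k es))) w = (\<Sum>i\<in>{i. i < k \<and> w \<in> es ! i}. alg_value algo es i))
         \<and> (\<forall>w. 0 \<le> snd (snd (run (take k es))) w \<and> snd (snd (run (take k es))) w \<le> 1)"
  using k
proof (induction k)
  case 0
  then show ?case by (simp add: run_def)
next
  case (Suc k)
  then have kl: "k < length es" by simp
  define S where "S = run (take k es)"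
  define e where "e = es ! k"
  have ed: "is_edge e" using E kl unfolding e_def by simp
  have ue: "fst (ends e) \<noteq> snd (ends e)" "e = {fst (ends e), snd (ends e)}" using ends_prop[OF ed] by auto
  have IH: "\<forall>w. snd (snd S) w = (\<Sum>i\<in>{i. i < k \<and> w \<in> es ! i}. alg_value algo es i)"
    "\<forall>w. 0 \<le> snd (snd S) w \<and> snd (snd S) w \<le> 1"
    using Suc kl unfolding S_def by auto
  have R: "run (take (Suc k) es) = stp S e" unfolding S_def e_def using run_take_Suc[OF kl] .
  have av: "alg_value algo es k = yv S e" unfolding S_def e_def using alg_value_eq[OF kl] .
  have mem: "\<And>w. (w \<in> e) = (w = fst (ends e) \<or> w = snd (ends e))" using ue by auto
  show ?case
  proof (rule conjI; intro allI)
    fix w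
    show "snd (snd (run (take (Suc k) es))) w = (\<Sum>i\<in>{i. i < Suc k \<and> w \<in> es ! i}. alg_value algo es i)"
    proof (cases "w \<in> e")
      case True
      have "{i. i < Suc k \<and> w \<in> es ! i} = insert k {i. i < k \<and> w \<in> es ! i}"
        using set_Suc[OF kl, of w] True unfolding e_def by auto
      then have "(\<Sum>i\<in>{i. i < Suc k \<and> w \<in> es ! i}. alg_value algo es i)
          = alg_value algo es k + (\<Sum>i\<in>{i. i < k \<and> w \<in> es ! i}. alg_value algo es i)"
        by simp
      then show ?thesis using R stp_comp(2)[OF ue(1), of S w] True mem IH(1) av by simp
    next
      case False
      have "{i. i < Suc k \<and> w \<in> es ! i} = {i. i < k \<and> w \<in> es ! i}"
        using set_Suc[OF kl, of w] False unfolding e_def by auto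
      then show ?thesis using R stp_comp(2)[OF ue(1), of S w] False mem IH(1) by simp
    qed
  next
    fix w
    have y0: "0 \<le> yv S e" by (rule yv_ge0)
    have yb: "w = fst (ends e) \<or> w = snd (ends e) \<Longrightarrow> snd (snd S) w + yv S e \<le> 1"
    proof -
      assume h: "w = fst (ends e) \<or> w = snd (ends e)"
      show ?thesis
      proof (cases "snd (snd S) (fst (ends e)) + cst * Dst S e \<le> 1 \<and>
                snd (snd S) (snd (ends e)) + cst * Dst S e \<le> 1")
        case True then show ?thesis using h unfolding yv_def by auto
      next
        case False then show ?thesis using IH(2) unfolding yv_def by auto
      qed
    qed
    show "0 \<le> snd (snd (run (take (Suc k) es))) w \<and> snd (snd (run (take (Suc k) es))) w \<le> 1"
      using R stp_comp(2)[OF ue(1), of S w] IH(2) y0 yb by auto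
  qed
qed

lemma valid_algo: "valid_online_alg algo"
  unfolding valid_online_alg_def
proof (intro allI impI)
  fix es t assume v: "valid_instance (es :: 'v set list)" and t: "t \<le> length es"
  have E: "\<forall>e\<in>set es. is_edge e" using v unfolding valid_instance_def by simp
  show "feasible_at algo es t"
    unfolding feasible_at_def
  proof (intro conjI allI impI)
    fix i assume "i < t"
    then show "0 \<le> alg_value algo es i" using alg_value_eq[of i es] t yv_ge0 by simp
  next
    fix w
    show "(\<Sum>i\<in>{i. i < t \<and> w \<in> es ! i}. alg_value algo es i) \<le> 1"
      using feas_inv[OF E t] by metis
  qed
qed


lemma deg_bound:
  assumes v: "valid_instance es" and md: "max_degree_le 3 (set es)" and k: "k \<le> length es"
  shows "card {i. i < k \<and> w \<in> es ! i} \<le> 3"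
proof -
  have d: "distinct es" using v unfolding valid_instance_def by simp
  have "card {i. i < k \<and> w \<in> es ! i} \<le> card {e \<in> set es. w \<in> e}"
  proof (rule card_inj_on_le[where f = "nth es"])
    show "inj_on (nth es) {i. i < k \<and> w \<in> es ! i}"
      using d k by (auto simp: inj_on_def nth_eq_iff_index_eq)
    show "nth es ` {i. i < k \<and> w \<in> es ! i} \<subseteq> {e \<in> set es. w \<in> e}"
      using k by auto
    show "finite {e \<in> set es. w \<in> e}" by simp
  qed
  also have "\<dots> \<le> 3" using md unfolding max_degree_le_def by simp
  finally show ?thesis .
qed

definition Dof :: "'v set list \<Rightarrow> nat \<Rightarrow> real" where
  "Dof es i = Dst (run (take i es)) (es ! i)"

lemma main_inv:
  assumes v: "valid_instance es" and md: "max_degree_le 3 (set es)" and k: "k \<le> length es"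
  shows "(\<forall>w. fst (run (take k es)) w = card {i. i < k \<and> w \<in> es ! i})
    \<and> (\<forall>w. Pinv (fst (run (take k es)) w) (fst (snd (run (take k es))) w) (snd (snd (run (take k es))) w))
    \<and> (\<forall>i<k. 1 \<le> fst (snd (run (take k es))) (fst (ends (es ! i))) + fst (snd (run (take k es))) (snd (ends (es ! i))))
    \<and> (\<forall>w. w \<notin> \<Union>(set (take k es)) \<longrightarrow> fst (snd (run (take k es))) w = 0)
    \<and> (\<forall>W. finite W \<longrightarrow> \<Union>(set (take k es)) \<subseteq> W \<longrightarrow> (\<Sum>w\<in>W. fst (snd (run (take k es))) w) = (\<Sum>i<k. Dof es i))
    \<and> (\<forall>i<k. alg_value algo es i = cst * Dof es i)"
  using k
proof (induction k)
  case 0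
  show ?case using cst_bounds by (simp add: run_def Pinv_def)
next
  case (Suc k)
  then have kl: "k < length es" by simp
  define S where "S = run (take k es)"
  define e where "e = es ! k"
  define u where "u = fst (ends e)"
  define vv where "vv = snd (ends e)"
  define D where "D = Dst S e"
  have E: "\<forall>e\<in>set es. is_edge e" using v unfolding valid_instance_def by simp
  have ed: "is_edge e" using E kl unfolding e_def by simp
  have ue: "u \<noteq> vv" "e = {u, vv}" using ends_prop[OF ed] unfolding u_def vv_def by auto
  have IH: "\<forall>w. fst S w = card {i. i < k \<and> w \<in> es ! i}"
    "\<forall>w. Pinv (fst S w) (fst (snd S) w) (snd (snd S) w)"
    "\<forall>i<k. 1 \<le> fst (snd S) (fst (ends (es ! i))) + fst (snd S) (snd (ends (es ! i)))"
    "\<forall>w. w \<notin> \<Union>(set (take k es)) \<longrightarrow> fst (snd S) w = 0"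
    "\<forall>W. finite W \<longrightarrow> \<Union>(set (take k es)) \<subseteq> W \<longrightarrow> (\<Sum>w\<in>W. fst (snd S) w) = (\<Sum>i<k. Dof es i)"
    "\<forall>i<k. alg_value algo es i = cst * Dof es i"
    using Suc kl unfolding S_def by auto
  have R: "run (take (Suc k) es) = stp S e" unfolding S_def e_def using run_take_Suc[OF kl] .
  have av: "alg_value algo es k = yv S e" unfolding S_def e_def using alg_value_eq[OF kl] .
  have DofK: "Dof es k = D" unfolding Dof_def D_def S_def e_def ..
  have mem: "\<And>w. (w \<in> e) = (w = u \<or> w = vv)" using ue by auto
  have deg: "\<And>w. w \<in> e \<Longrightarrow> fst S w \<le> 2"
  proof -
    fix w assume we: "w \<in> e"
    have "{i. i < Suc k \<and> w \<in> es ! i} = insert k {i. i < k \<and> w \<in> es ! i}"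
      using set_Suc[OF kl, of w] we unfolding e_def by auto
    then have "card {i. i < Suc k \<and> w \<in> es ! i} = Suc (card {i. i < k \<and> w \<in> es ! i})" by simp
    moreover have "card {i. i < Suc k \<and> w \<in> es ! i} \<le> 3" using deg_bound[OF v md] kl by simp
    ultimately show "fst S w \<le> 2" using IH(1) by simp
  qed
  have du: "fst S u \<le> 2" and dv: "fst S vv \<le> 2" using deg ue by auto
  have Du: "D = max 0 (1 - fst (snd S) u - fst (snd S) vv)" unfolding D_def Dst_def u_def vv_def ..
  have Dv: "D = max 0 (1 - fst (snd S) vv - fst (snd S) u)" using Du by simp
  have sideU: "0 \<le> shu S u vv D \<and> snd (snd S) u + cst * D \<le> 1 \<and>
      Pinv (Suc (fst S u)) (fst (snd S) u + shu S u vv D) (snd (snd S) u + cst * D)"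
    unfolding shu_def using side[OF IH(2)[rule_format, of u] IH(2)[rule_format, of vv] du dv Du] .
  have sideV: "0 \<le> shu S vv u D \<and> snd (snd S) vv + cst * D \<le> 1 \<and>
      Pinv (Suc (fst S vv)) (fst (snd S) vv + shu S vv u D) (snd (snd S) vv + cst * D)"
    unfolding shu_def using side[OF IH(2)[rule_format, of vv] IH(2)[rule_format, of u] dv du Dv] .
  have sum: "shu S u vv D + shu S vv u D = D" unfolding shu_def by (rule shr_sum)
  have yeq: "yv S e = cst * D" using sideU sideV unfolding yv_def D_def u_def vv_def by simp
  have C1: "\<And>w. fst (stp S e) w = fst S w + (if w = u \<or> w = vv then 1 else 0)"
    using stp_comp(1)[OF ends_prop[OF ed, THEN conjunct1]] unfolding u_def vv_def by blast
  have C2: "\<And>w. snd (snd (stp S e)) w = snd (snd S) w + (if w = u \<or> w = vv then cst * D else 0)"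
    using stp_comp(2)[OF ends_prop[OF ed, THEN conjunct1]] yeq unfolding u_def vv_def by simp
  have C3: "\<And>w. fst (snd (stp S e)) w = fst (snd S) w + (if w = u then shu S u vv D
        else if w = vv then shu S vv u D else 0)"
    using stp_comp(3)[OF ends_prop[OF ed, THEN conjunct1]] unfolding u_def vv_def D_def by blast
  have zmono: "\<And>w. fst (snd S) w \<le> fst (snd (stp S e)) w" using C3 sideU sideV by simp
  have setS: "\<Union>(set (take (Suc k) es)) = \<Union>(set (take k es)) \<union> e"
    using kl unfolding e_def by (simp add: take_Suc_conv_app_nth Un_commute)
  show ?case unfolding R
  proof (intro conjI allI impI)
    fix w
    show "fst (stp S e) w = card {i. i < Suc k \<and> w \<in> es ! i}"
    proof (cases "w \<in> e")
      case True
      have "{i. i < Suc k \<and> w \<in> es ! i} = insert k {i. i < k \<and> w \<in> es ! i}"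
        using set_Suc[OF kl, of w] True unfolding e_def by auto
      then show ?thesis using C1 IH(1) True mem by simp
    next
      case False
      have "{i. i < Suc k \<and> w \<in> es ! i} = {i. i < k \<and> w \<in> es ! i}"
        using set_Suc[OF kl, of w] False unfolding e_def by auto
      then show ?thesis using C1 IH(1) False mem by simp
    qed
  next
    fix w
    show "Pinv (fst (stp S e) w) (fst (snd (stp S e)) w) (snd (snd (stp S e)) w)"
    proof (cases "w = u")
      case True then show ?thesis using C1 C2 C3 sideU by simp
    next
      case False
      show ?thesis
      proof (cases "w = vv")
        case True then show ?thesis using C1 C2 C3 sideV ue by simp
      next
        case False
        then show ?thesis using C1 C2 C3 IH(2) \<open>w \<noteq> u\<close> by simp
      qed
    qed
  next
    fix i assume i: "i < Suc k"
    show "1 \<le> fst (snd (stp S e)) (fst (ends (es ! i))) + fst (snd (stp S e)) (snd (ends (es ! i)))"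
    proof (cases "i < k")
      case True
      then show ?thesis using IH(3) zmono[of "fst (ends (es ! i))"] zmono[of "snd (ends (es ! i))"]
        by fastforce
    next
      case False
      then have "i = k" using i by simp
      then have "es ! i = e" unfolding e_def by simp
      then have "fst (snd (stp S e)) (fst (ends (es ! i))) + fst (snd (stp S e)) (snd (ends (es ! i)))
          = fst (snd S) u + fst (snd S) vv + D"
        using C3 ue sum unfolding u_def vv_def by simp
      then show ?thesis using Du by simp
    qed
  next
    fix w assume "w \<notin> \<Union>(set (take (Suc k) es))"
    then have "w \<notin> \<Union>(set (take k es))" "w \<noteq> u" "w \<noteq> vv" using setS ue by auto
    then show "fst (snd (stp S e)) w = 0" using C3 IH(4) by simp
  next
    fix W assume W: "finite W" "\<Union>(set (take (Suc k) es)) \<subseteq> W"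
    then have W1: "\<Union>(set (take k es)) \<subseteq> W" and uW: "u \<in> W" and vW: "vv \<in> W"
      using setS ue by auto
    have "(\<Sum>w\<in>W. fst (snd (stp S e)) w) = (\<Sum>w\<in>W. fst (snd S) w + ((if w = u then shu S u vv D else 0)
        + (if w = vv then shu S vv u D else 0)))"
      using C3 ue(1) by (intro sum.cong) auto
    also have "\<dots> = (\<Sum>w\<in>W. fst (snd S) w) + shu S u vv D + shu S vv u D"
      using W(1) uW vW by (simp add: sum.distrib sum.delta)
    also have "\<dots> = (\<Sum>i<k. Dof es i) + D" using IH(5) W(1) W1 sum by simp
    also have "\<dots> = (\<Sum>i<Suc k. Dof es i)" using DofK by simp
    finally show "(\<Sum>w\<in>W. fst (snd (stp S e)) w) = (\<Sum>i<Suc k. Dof es i)" .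
  next
    fix i assume i: "i < Suc k"
    show "alg_value algo es i = cst * Dof es i"
    proof (cases "i < k")
      case True then show ?thesis using IH(6) by simp
    next
      case False then have "i = k" using i by simp
      then show ?thesis using av yeq DofK by simp
    qed
  qed
qed


lemma matching_bound:
  assumes v: "valid_instance es" and md: "max_degree_le 3 (set es)" and t: "t \<le> length es"
    and M: "M \<subseteq> set (take t es)" "is_matching M"
  shows "real (card M) \<le> (\<Sum>i<t. Dof es i)"
proof -
  define z where "z = fst (snd (run (take t es)))"
  note I = main_inv[OF v md t, folded z_def]
  have E: "\<forall>e\<in>set es. is_edge e" using v unfolding valid_instance_def by simp
  have fin_e: "\<And>e. e \<in> set (take t es) \<Longrightarrow> finite e"
    using E by (auto simp: is_edge_def dest: in_set_takeD)
  have finM: "finite M" using M(1) finite_subset by blast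
  have cover: "\<And>e. e \<in> M \<Longrightarrow> 1 \<le> (\<Sum>w\<in>e. z w)"
  proof -
    fix e assume eM: "e \<in> M"
    then have "e \<in> set (take t es)" using M by auto
    then obtain i where i: "i < length (take t es)" "e = take t es ! i" by (auto simp: in_set_conv_nth)
    then have it: "i < t" "i < length es" and ei: "e = es ! i" by auto
    have ed: "is_edge e" using E ei it by simp
    have ue: "fst (ends e) \<noteq> snd (ends e)" "e = {fst (ends e), snd (ends e)}" using ends_prop[OF ed] by auto
    have "(\<Sum>w\<in>{fst (ends e), snd (ends e)}. z w) = z (fst (ends e)) + z (snd (ends e))"
      using ue(1) by simp
    then have "(\<Sum>w\<in>e. z w) = z (fst (ends e)) + z (snd (ends e))"
      using ue(2) by metis
    moreover have "1 \<le> z (fst (ends e)) + z (snd (ends e))" using I it ei by blast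
    ultimately show "1 \<le> (\<Sum>w\<in>e. z w)" by simp
  qed
  have z0: "\<And>w. 0 \<le> z w" using I unfolding Pinv_def by blast
  have "real (card M) = (\<Sum>e\<in>M. 1)" by simp
  also have "\<dots> \<le> (\<Sum>e\<in>M. \<Sum>w\<in>e. z w)" using cover by (intro sum_mono) auto
  also have "\<dots> = (\<Sum>w\<in>\<Union>M. z w)"
  proof -
    have "(\<Sum>w\<in>\<Union>M. z w) = (sum \<circ> sum) z M"
    proof (rule sum.Union_disjoint)
      show "\<forall>A\<in>M. finite A" using fin_e M(1) by auto
      show "\<forall>A\<in>M. \<forall>B\<in>M. A \<noteq> B \<longrightarrow> A \<inter> B = {}" using M(2) unfolding is_matching_def by blast
    qed
    then show ?thesis by simp
  qed
  also have "\<dots> \<le> (\<Sum>w\<in>\<Union>(set (take t es)). z w)"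
  proof (rule sum_mono2)
    show "finite (\<Union>(set (take t es)))" using fin_e by auto
    show "\<Union>M \<subseteq> \<Union>(set (take t es))" using M(1) by auto
    show "\<And>b. b \<in> \<Union>(set (take t es)) - \<Union>M \<Longrightarrow> 0 \<le> z b" using z0 by simp
  qed
  also have "\<dots> = (\<Sum>i<t. Dof es i)" using I fin_e by auto
  finally show ?thesis .
qed

lemma guarantee: "achieves_guarantee_deg algo 3 (4 / (9 - sqrt 5))"
  unfolding achieves_guarantee_deg_def
proof (intro allI impI)
  fix es t assume v: "valid_instance es" and md: "max_degree_le 3 (set es)" and t: "t \<le> length es"
  define E where "E = set (take t es)"
  have fin: "finite {card M |M. M \<subseteq> E \<and> is_matching M}"
  proof (rule finite_subset)
    show "{card M |M. M \<subseteq> E \<and> is_matching M} \<subseteq> card ` Pow E" by auto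
    show "finite (card ` Pow E)" unfolding E_def by simp
  qed
  have ne: "{card M |M. M \<subseteq> E \<and> is_matching M} \<noteq> {}"
    using is_matching_def by auto
  obtain M where M: "M \<subseteq> E" "is_matching M" "nu E = card M"
    using Max_in[OF fin ne] unfolding nu_def by auto
  have nb: "real (nu E) \<le> (\<Sum>i<t. Dof es i)"
    using matching_bound[OF v md t, of M] M unfolding E_def by simp
  have fv: "frac_value algo es t = cst * (\<Sum>i<t. Dof es i)"
    unfolding frac_value_def using main_inv[OF v md t] by (simp add: sum_distrib_left)
  have "cst * real (nu E) \<le> cst * (\<Sum>i<t. Dof es i)" using nb cpos by simp
  then show "4 / (9 - sqrt 5) * real (nu (set (take t es))) \<le> frac_value algo es t"
    using fv unfolding E_def cst_def by simp
qed

theorem mainTheorem1: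
  shows "\<exists>A :: 'v online_alg. valid_online_alg A \<and>
           achieves_guarantee_deg A 3 (4 / (9 - sqrt 5))"
  using valid_algo guarantee by blast

end
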